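(* Consider the model described in the context with private signals that are conditionally independent given $H$ but not necessarily identically distributed, and with a unanimity fusion rule, i.e. $L=1$ (\textsc{or}) or $L=N$ (\textsc{and}). Then secret voting is optimal: the minimum team Bayes risk under public voting, for any order in which the agents act, equals the minimum team Bayes risk under secret voting, which (for $L=1$) is $\min_{\lambda_1,\dots,\lambda_N}\big[c_{10}p_0\big(1-\prod_{n=1}^N(1-P^{\rm I}_{e,n})\big)+c_{01}p_1\prod_{n=1}^N P^{\rm II}_{e,n}\big]$ and (for $L=N$) is $\min_{\lambda_1,\dots,\lambda_N}\big[c_{10}p_0\prod_{n=1}^N P^{\rm I}_{e,n}+c_{01}p_1\big(1-\prod_{n=1}^N(1-P^{\rm II}_{e,n})\big)\big]$. Moreover, there is an optimal public-voting strategy in which each agent uses her optimal secret-voting threshold regardless of the public signals and of her position in the order; thus neither the public signals nor the ordering of agents affects the optimal decision rules or the resulting performance.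
   Context: Binary hypothesis $H\in\{0,1\}$ with prior $p_0=\mathbb P\{H=0\}\in(0,1)$, $p_1=1-p_0$. Agents $n=1,\dots,N$ each observe a private signal $Y_n$ with likelihood $f_{Y_n|H}(y\mid h)$; the $Y_n$ are conditionally independent given $H$, and each likelihood ratio $f_{Y_n|H}(y\mid 1)/f_{Y_n|H}(y\mid 0)$ is strictly increasing in $y$. Each agent makes a local decision $\widehat H_n\in\{0,1\}$ by a threshold test: $\widehat H_n=1$ iff $Y_n\ge$ (her threshold). Local error probabilities: $P^{\rm I}_{e,n}=\mathbb P\{\widehat H_n=1\mid H=0\}$, $P^{\rm II}_{e,n}=\mathbb P\{\widehat H_n=0\mid H=1\}$, determined by Agent $n$'s threshold $\lambda_n$. The team decision uses the $L$-out-of-$N$ fusion rule: $\widehat H=1$ iff $\sum_{n=1}^N\widehat H_n\ge L$. The team Bayes risk is $R=c_{10}p_0\,\mathbb P\{\widehat H=1\mid H=0\}+c_{01}p_1\,\mathbb P\{\widehat H=0\mid H=1\}$ with costs $c_{10},c_{01}>0$; "optimal" means minimizing $R$ over all allowed thresholds. Secret voting: each Agent $n$ uses a single threshold $\lambda_n$ (her decision depends only on $Y_n$). Public voting: agents decide in some fixed order, each agent observes all earlier agents' decisions (the "public signals") and uses a threshold that may depend on the observed decisions. *)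

theory Defs
  imports "HOL-Probability.Probability"
begin

text \<open>Hypotheses: False encodes H = 0, True encodes H = 1.
  Agents are 0, ..., N-1.  f n h is the conditional density of Y_n given H = h
  (w.r.t. Lebesgue measure).  A local decision True means "decide 1".\<close>

definition sig_dist :: "(real \<Rightarrow> real) \<Rightarrow> real measure" where
  "sig_dist g = density lborel (\<lambda>y. ennreal (g y))"

definition dec_prob :: "(real \<Rightarrow> real) \<Rightarrow> real \<Rightarrow> bool \<Rightarrow> real" where
  "dec_prob g lam d =
     (if d then measure (sig_dist g) {lam..} else measure (sig_dist g) {..<lam})"

definition PeI :: "(nat \<Rightarrow> bool \<Rightarrow> real \<Rightarrow> real) \<Rightarrow> nat \<Rightarrow> real \<Rightarrow> real" where
  "PeI f n lam = dec_prob (f n False) lam True"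

definition PeII :: "(nat \<Rightarrow> bool \<Rightarrow> real \<Rightarrow> real) \<Rightarrow> nat \<Rightarrow> real \<Rightarrow> real" where
  "PeII f n lam = dec_prob (f n True) lam False"

definition fusion :: "nat \<Rightarrow> bool list \<Rightarrow> bool" where
  "fusion L ds = (L \<le> length (filter id ds))"

text \<open>Secret voting: agent n uses the single threshold lam n.
  Probability that the team decides d given H = h (sum over all decision vectors,
  using conditional independence).\<close>
definition team_prob_sec ::
  "nat \<Rightarrow> nat \<Rightarrow> (nat \<Rightarrow> bool \<Rightarrow> real \<Rightarrow> real) \<Rightarrow> (nat \<Rightarrow> real) \<Rightarrow> bool \<Rightarrow> bool \<Rightarrow> real" where
  "team_prob_sec N L f lam h d =
     (\<Sum>ds\<in>{ds. length ds = N \<and> fusion L ds = d}.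
        \<Prod>n<N. dec_prob (f n h) (lam n) (ds ! n))"

text \<open>Public voting: sigma k is the agent acting at position k (sigma is a
  bijection of {0..<N}); s k hist is the threshold used by the agent at position k
  after observing the list hist of the k earlier public decisions.
  ds lists the decisions in the order of acting.\<close>
definition team_prob_pub ::
  "nat \<Rightarrow> nat \<Rightarrow> (nat \<Rightarrow> bool \<Rightarrow> real \<Rightarrow> real) \<Rightarrow> (nat \<Rightarrow> nat)
     \<Rightarrow> (nat \<Rightarrow> bool list \<Rightarrow> real) \<Rightarrow> bool \<Rightarrow> bool \<Rightarrow> real" where
  "team_prob_pub N L f \<sigma> s h d =
     (\<Sum>ds\<in>{ds. length ds = N \<and> fusion L ds = d}.
        \<Prod>k<N. dec_prob (f (\<sigma> k) h) (s k (take k ds)) (ds ! k))"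

definition risk_sec ::
  "nat \<Rightarrow> nat \<Rightarrow> (nat \<Rightarrow> bool \<Rightarrow> real \<Rightarrow> real) \<Rightarrow> real \<Rightarrow> real \<Rightarrow> real
     \<Rightarrow> (nat \<Rightarrow> real) \<Rightarrow> real" where
  "risk_sec N L f p0 c10 c01 lam =
     c10 * p0 * team_prob_sec N L f lam False True
     + c01 * (1 - p0) * team_prob_sec N L f lam True False"

definition risk_pub ::
  "nat \<Rightarrow> nat \<Rightarrow> (nat \<Rightarrow> bool \<Rightarrow> real \<Rightarrow> real) \<Rightarrow> real \<Rightarrow> real \<Rightarrow> real
     \<Rightarrow> (nat \<Rightarrow> nat) \<Rightarrow> (nat \<Rightarrow> bool list \<Rightarrow> real) \<Rightarrow> real" where
  "risk_pub N L f p0 c10 c01 \<sigma> s =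
     c10 * p0 * team_prob_pub N L f \<sigma> s False True
     + c01 * (1 - p0) * team_prob_pub N L f \<sigma> s True False"

definition min_risk_sec ::
  "nat \<Rightarrow> nat \<Rightarrow> (nat \<Rightarrow> bool \<Rightarrow> real \<Rightarrow> real) \<Rightarrow> real \<Rightarrow> real \<Rightarrow> real \<Rightarrow> real" where
  "min_risk_sec N L f p0 c10 c01 = (INF lam. risk_sec N L f p0 c10 c01 lam)"

definition min_risk_pub ::
  "nat \<Rightarrow> nat \<Rightarrow> (nat \<Rightarrow> bool \<Rightarrow> real \<Rightarrow> real) \<Rightarrow> real \<Rightarrow> real \<Rightarrow> real
     \<Rightarrow> (nat \<Rightarrow> nat) \<Rightarrow> real" where
  "min_risk_pub N L f p0 c10 c01 \<sigma> = (INF s. risk_pub N L f p0 c10 c01 \<sigma> s)"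

end

theory Submission
  imports Defs
begin


lemma fin_len: "finite {ds::bool list. length ds = N}"
  using finite_lists_length_eq[of "UNIV::bool set" N] by simp

lemma step_prod:
  assumes "length ds = N"
  shows "(\<Prod>k<Suc N. q k (take k (ds@[b])) ((ds@[b])!k)) =
         (\<Prod>k<N. q k (take k ds) (ds!k)) * q N ds (b::bool)"
proof -
  have "(\<Prod>k<N. q k (take k (ds@[b])) ((ds@[b])!k)) = (\<Prod>k<N. q k (take k ds) (ds!k))"
    by (rule prod.cong) (use assms in \<open>auto simp: nth_append\<close>)
  then show ?thesis using assms by (simp add: nth_append)
qed

lemma total:
  fixes q :: "nat \<Rightarrow> bool list \<Rightarrow> bool \<Rightarrow> real"
  assumes "\<And>k hist. k < N \<Longrightarrow> q k hist True + q k hist False = 1"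
  shows "(\<Sum>ds\<in>{ds. length ds = N}. \<Prod>k<N. q k (take k ds) (ds!k)) = 1"
  using assms
proof (induction N)
  case 0
  have "{ds::bool list. length ds = 0} = {[]}" by auto
  then show ?case by simp
next
  case (Suc N)
  let ?A = "{ds::bool list. length ds = N}"
  have S: "{ds::bool list. length ds = Suc N} = (\<lambda>(ds,b). ds@[b]) ` (?A \<times> UNIV)"
  proof
    show "{ds::bool list. length ds = Suc N} \<subseteq> (\<lambda>(ds,b). ds@[b]) ` (?A \<times> UNIV)"
    proof
      fix ds :: "bool list" assume "ds \<in> {ds. length ds = Suc N}"
      then have "ds = butlast ds @ [last ds]" "length (butlast ds) = N"
        by (auto intro!: append_butlast_last_id[symmetric])
      then show "ds \<in> (\<lambda>(ds,b). ds@[b]) ` (?A \<times> UNIV)"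
        by (metis (mono_tags, lifting) SigmaI UNIV_I case_prod_conv image_eqI mem_Collect_eq)
    qed
  qed auto
  have inj: "inj_on (\<lambda>(ds,b). ds@[b::bool]) (?A \<times> UNIV)"
    by (auto simp: inj_on_def)
  have "(\<Sum>ds\<in>{ds. length ds = Suc N}. \<Prod>k<Suc N. q k (take k ds) (ds!k))
      = (\<Sum>x\<in>?A \<times> UNIV. (\<lambda>ds. \<Prod>k<Suc N. q k (take k ds) (ds!k)) ((\<lambda>(ds,b). ds@[b]) x))"
    unfolding S by (rule sum.reindex[OF inj, unfolded comp_def])
  also have "\<dots> = (\<Sum>ds\<in>?A. \<Sum>b\<in>UNIV. \<Prod>k<Suc N. q k (take k (ds@[b])) ((ds@[b])!k))"
    by (subst sum.cartesian_product') (simp only: case_prod_conv)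
  also have "\<dots> = (\<Sum>ds\<in>?A. (\<Prod>k<N. q k (take k ds) (ds!k)) * (q N ds True + q N ds False))"
    proof (rule sum.cong[OF refl])
    fix ds assume "ds \<in> ?A"
    then have "length ds = N" by simp
    then show "(\<Sum>b\<in>UNIV. \<Prod>k<Suc N. q k (take k (ds@[b])) ((ds@[b])!k))
       = (\<Prod>k<N. q k (take k ds) (ds!k)) * (q N ds True + q N ds False)"
      by (simp only: step_prod UNIV_bool sum.insert_remove finite.intros) (simp add: algebra_simps)
  qed
  also have "\<dots> = (\<Sum>ds\<in>?A. (\<Prod>k<N. q k (take k ds) (ds!k)))"
    using Suc.prems by simp
  also have "\<dots> = 1" using Suc by simp
  finally show ?case .
qed

lemma all_rep: "(\<forall>x\<in>set ds. x = c) \<Longrightarrow> ds = replicate (length ds) c"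
  by (induction ds) auto

lemma fus_set:
  assumes Lc: "(L = 1 \<and> c = False) \<or> (L = N \<and> c = True)"
  shows "{ds. length ds = N \<and> fusion L ds = c} = {replicate N c}"
  using Lc
proof
  assume h: "L = 1 \<and> c = False"
  have "(fusion 1 ds = False) = (\<forall>x\<in>set ds. x = False)" for ds
  proof -
    have "(fusion 1 ds = False) = (filter id ds = [])"
      unfolding fusion_def by (cases "filter id ds") simp_all
    also have "\<dots> = (\<forall>x\<in>set ds. x = False)" by (simp add: filter_empty_conv)
    finally show ?thesis .
  qed
  then show ?thesis using h all_rep[of _ False] by auto
next
  assume h: "L = N \<and> c = True"
  have "(length ds = N \<and> fusion N ds = True) = (ds = replicate N True)" for ds
  proof
    assume a: "length ds = N \<and> fusion N ds = True"
    have "\<forall>x\<in>set ds. x = True"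
    proof (rule ccontr)
      assume "\<not> (\<forall>x\<in>set ds. x = True)"
      then obtain x where "x \<in> set ds" "\<not> id x" by auto
      then have "length (filter id ds) < length ds" by (rule length_filter_less)
      then show False using a unfolding fusion_def by simp
    qed
    then show "ds = replicate N True" using all_rep[of ds True] a by simp
  next
    assume "ds = replicate N True"
    then show "length ds = N \<and> fusion N ds = True" by (simp add: fusion_def)
  qed
  then show ?thesis using h by auto
qed

lemma tp_gen:
  fixes q :: "nat \<Rightarrow> bool list \<Rightarrow> bool \<Rightarrow> real"
  assumes hq: "\<And>k hist. k < N \<Longrightarrow> q k hist True + q k hist False = 1"
    and Lc: "(L = 1 \<and> c = False) \<or> (L = N \<and> c = True)"
  shows "(\<Sum>ds\<in>{ds. length ds = N \<and> fusion L ds = d}. \<Prod>k<N. q k (take k ds) (ds!k))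
     = (if d = c then (\<Prod>k<N. q k (replicate k c) c) else 1 - (\<Prod>k<N. q k (replicate k c) c))"
proof -
  let ?F = "\<lambda>ds. \<Prod>k<N. q k (take k ds) (ds!k)"
  have Frep: "?F (replicate N c) = (\<Prod>k<N. q k (replicate k c) c)"
    by (rule prod.cong) auto
  show ?thesis
  proof (cases "d = c")
    case True
    then show ?thesis using fus_set[OF Lc] Frep by simp
  next
    case False
    have "{ds. length ds = N \<and> fusion L ds = d} = {ds. length ds = N} - {replicate N c}"
      using fus_set[OF Lc] False by auto
    then have "(\<Sum>ds\<in>{ds. length ds = N \<and> fusion L ds = d}. ?F ds)
       = (\<Sum>ds\<in>{ds. length ds = N}. ?F ds) - ?F (replicate N c)"
      using fin_len by (simp add: sum_diff1)
    moreover have "(\<Sum>ds\<in>{ds. length ds = N}. ?F ds) = 1" by (rule total) (rule hq)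
    ultimately show ?thesis using Frep False by simp
  qed
qed

lemma dec_sum:
  assumes "prob_space (sig_dist g)"
  shows "dec_prob g lam True + dec_prob g lam False = 1"
proof -
  interpret prob_space "sig_dist g" by fact
  have sp: "space (sig_dist g) = UNIV" by (simp add: sig_dist_def)
  have ev: "{lam..} \<in> events" by (simp add: sig_dist_def)
  have "{..<lam} = space (sig_dist g) - {lam..}" using sp by auto
  then have "prob {..<lam} = 1 - prob {lam..}" using prob_compl[OF ev] by simp
  then show ?thesis by (simp add: dec_prob_def)
qed


lemma sec_formula:
  assumes dp0: "\<forall>n<N. \<forall>h. prob_space (sig_dist (f n h))"
    and Lc: "(L = 1 \<and> c = False) \<or> (L = N \<and> c = True)"
  shows "team_prob_sec N L f lam h d = (if d = c then (\<Prod>n<N. dec_prob (f n h) (lam n) c)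
           else 1 - (\<Prod>n<N. dec_prob (f n h) (lam n) c))"
  unfolding team_prob_sec_def
  using tp_gen[of N "\<lambda>k hist d. dec_prob (f k h) (lam k) d" L c d] dec_sum[OF dp0[rule_format]] Lc by simp

lemma pub_formula:
  assumes dp0: "\<forall>n<N. \<forall>h. prob_space (sig_dist (f n h))"
    and Lc: "(L = 1 \<and> c = False) \<or> (L = N \<and> c = True)"
    and bij: "bij_betw \<sigma> {..<N} {..<N}"
  shows "team_prob_pub N L f \<sigma> s h d = (if d = c then (\<Prod>k<N. dec_prob (f (\<sigma> k) h) (s k (replicate k c)) c)
           else 1 - (\<Prod>k<N. dec_prob (f (\<sigma> k) h) (s k (replicate k c)) c))"
proof -
  have "\<And>k. k < N \<Longrightarrow> \<sigma> k < N" using bij bij_betwE by blast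
  then show ?thesis
    unfolding team_prob_pub_def
    using tp_gen[of N "\<lambda>k hist d. dec_prob (f (\<sigma> k) h) (s k hist) d" L c d] dec_sum[OF dp0[rule_format]] Lc by simp
qed

lemma pub_to_sec:
  assumes dp0: "\<forall>n<N. \<forall>h. prob_space (sig_dist (f n h))"
    and Lc: "(L = 1 \<and> c = False) \<or> (L = N \<and> c = True)"
    and bij: "bij_betw \<sigma> {..<N} {..<N}"
  shows "risk_pub N L f p0 c10 c01 \<sigma> s = risk_sec N L f p0 c10 c01
           (\<lambda>n. s (inv_into {..<N} \<sigma> n) (replicate (inv_into {..<N} \<sigma> n) c))"
proof -
  let ?lam = "\<lambda>n. s (inv_into {..<N} \<sigma> n) (replicate (inv_into {..<N} \<sigma> n) c)"
  have P: "(\<Prod>k<N. dec_prob (f (\<sigma> k) h) (s k (replicate k c)) c) = (\<Prod>n<N. dec_prob (f n h) (?lam n) c)" for h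
  proof -
    have inj: "inj_on \<sigma> {..<N}" using bij bij_betw_def by blast
    have "(\<Prod>n<N. dec_prob (f n h) (?lam n) c) = (\<Prod>k<N. dec_prob (f (\<sigma> k) h) (?lam (\<sigma> k)) c)"
      using prod.reindex_bij_betw[OF bij, of "\<lambda>n. dec_prob (f n h) (?lam n) c"] by (simp only:)
    also have "\<dots> = (\<Prod>k<N. dec_prob (f (\<sigma> k) h) (s k (replicate k c)) c)"
      by (rule prod.cong) (auto simp: inv_into_f_f[OF inj])
    finally show ?thesis by simp
  qed
  show ?thesis unfolding risk_pub_def risk_sec_def
    by (simp only: pub_formula[OF dp0 Lc bij] sec_formula[OF dp0 Lc] P)
qed

lemma sec_to_pub:
  assumes dp0: "\<forall>n<N. \<forall>h. prob_space (sig_dist (f n h))"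
    and Lc: "(L = 1 \<and> c = False) \<or> (L = N \<and> c = True)"
    and bij: "bij_betw \<sigma> {..<N} {..<N}"
  shows "risk_pub N L f p0 c10 c01 \<sigma> (\<lambda>k hist. lam (\<sigma> k)) = risk_sec N L f p0 c10 c01 lam"
proof -
  have P: "(\<Prod>k<N. dec_prob (f (\<sigma> k) h) (lam (\<sigma> k)) c) = (\<Prod>n<N. dec_prob (f n h) (lam n) c)" for h
    using prod.reindex_bij_betw[OF bij, of "\<lambda>n. dec_prob (f n h) (lam n) c"] by (simp only:)
  show ?thesis unfolding risk_pub_def risk_sec_def
    by (simp only: pub_formula[OF dp0 Lc bij] sec_formula[OF dp0 Lc] P)
qed

theorem theorem3:
  fixes N L :: nat
    and f :: "nat \<Rightarrow> bool \<Rightarrow> real \<Rightarrow> real"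
    and p0 c10 c01 :: real
  assumes N: "N \<ge> 1"
    and p0: "0 < p0" "p0 < 1"
    and costs: "c10 > 0" "c01 > 0"
    and dens_meas: "\<And>n h. n < N \<Longrightarrow> f n h \<in> borel_measurable lborel"
    and dens_nonneg: "\<And>n h y. n < N \<Longrightarrow> 0 \<le> f n h y"
    and dens_prob: "\<And>n h. n < N \<Longrightarrow> prob_space (sig_dist (f n h))"
    and MLR: "\<And>n. n < N \<Longrightarrow> strict_mono (\<lambda>y. f n True y / f n False y)"
    and unanimity: "L = 1 \<or> L = N"
  shows
    "(\<forall>\<sigma>. bij_betw \<sigma> {..<N} {..<N} \<longrightarrow>
         min_risk_pub N L f p0 c10 c01 \<sigma> = min_risk_sec N L f p0 c10 c01)
     \<and> (L = 1 \<longrightarrow> min_risk_sec N L f p0 c10 c01 =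
          (INF lam. c10 * p0 * (1 - (\<Prod>n<N. 1 - PeI f n (lam n)))
                    + c01 * (1 - p0) * (\<Prod>n<N. PeII f n (lam n))))
     \<and> (L = N \<longrightarrow> min_risk_sec N L f p0 c10 c01 =
          (INF lam. c10 * p0 * (\<Prod>n<N. PeI f n (lam n))
                    + c01 * (1 - p0) * (1 - (\<Prod>n<N. 1 - PeII f n (lam n)))))
     \<and> (\<forall>lam. risk_sec N L f p0 c10 c01 lam = min_risk_sec N L f p0 c10 c01 \<longrightarrow>
          (\<forall>\<sigma>. bij_betw \<sigma> {..<N} {..<N} \<longrightarrow>
             risk_pub N L f p0 c10 c01 \<sigma> (\<lambda>k hist. lam (\<sigma> k))
               = min_risk_pub N L f p0 c10 c01 \<sigma>))"
  
proof -
  have dpa: "\<forall>n<N. \<forall>h. prob_space (sig_dist (f n h))" using dens_prob by blast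
  define c where "c = (L \<noteq> 1)"
  have Lc: "(L = 1 \<and> c = False) \<or> (L = N \<and> c = True)" using unanimity c_def by auto
  have R: "min_risk_pub N L f p0 c10 c01 \<sigma> = min_risk_sec N L f p0 c10 c01"
    if bij: "bij_betw \<sigma> {..<N} {..<N}" for \<sigma>
  proof -
    have "range (risk_pub N L f p0 c10 c01 \<sigma>) = range (risk_sec N L f p0 c10 c01)"
    proof
      show "range (risk_pub N L f p0 c10 c01 \<sigma>) \<subseteq> range (risk_sec N L f p0 c10 c01)"
      proof (rule image_subsetI)
        fix s show "risk_pub N L f p0 c10 c01 \<sigma> s \<in> range (risk_sec N L f p0 c10 c01)"
        proof -
          have eq: "risk_pub N L f p0 c10 c01 \<sigma> s = risk_sec N L f p0 c10 c01
             (\<lambda>n. s (inv_into {..<N} \<sigma> n) (replicate (inv_into {..<N} \<sigma> n) c))"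
            by (rule pub_to_sec[OF dpa Lc bij])
          show ?thesis unfolding eq by (rule rangeI)
        qed
      qed
      show "range (risk_sec N L f p0 c10 c01) \<subseteq> range (risk_pub N L f p0 c10 c01 \<sigma>)"
      proof (rule image_subsetI)
        fix lam show "risk_sec N L f p0 c10 c01 lam \<in> range (risk_pub N L f p0 c10 c01 \<sigma>)"
        proof -
          have eq: "risk_pub N L f p0 c10 c01 \<sigma> (\<lambda>k hist. lam (\<sigma> k)) = risk_sec N L f p0 c10 c01 lam"
            by (rule sec_to_pub[OF dpa Lc bij])
          show ?thesis unfolding eq[symmetric] by (rule rangeI)
        qed
      qed
    qed
    then show ?thesis unfolding min_risk_pub_def min_risk_sec_def by simp
  qed
  have A: "L = 1 \<longrightarrow> min_risk_sec N L f p0 c10 c01 =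
          (INF lam. c10 * p0 * (1 - (\<Prod>n<N. 1 - PeI f n (lam n)))
                    + c01 * (1 - p0) * (\<Prod>n<N. PeII f n (lam n)))"
  proof
    assume L1: "L = 1"
    have Lc': "(L = 1 \<and> False = False) \<or> (L = N \<and> False = True)" using L1 by simp
    have "risk_sec N L f p0 c10 c01 lam = c10 * p0 * (1 - (\<Prod>n<N. 1 - PeI f n (lam n)))
                    + c01 * (1 - p0) * (\<Prod>n<N. PeII f n (lam n))" for lam
    proof -
      have "(\<Prod>n<N. 1 - PeI f n (lam n)) = (\<Prod>n<N. dec_prob (f n False) (lam n) False)"
      proof (rule prod.cong[OF refl])
        fix n assume "n \<in> {..<N}"
        then have "dec_prob (f n False) (lam n) True + dec_prob (f n False) (lam n) False = 1"
          using dec_sum[OF dens_prob[of n]] by simp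
        then show "1 - PeI f n (lam n) = dec_prob (f n False) (lam n) False"
          unfolding PeI_def by linarith
      qed
      then show ?thesis unfolding risk_sec_def
        by (simp only: sec_formula[OF dpa Lc'] PeII_def if_True if_False simp_thms)
    qed
    then show "min_risk_sec N L f p0 c10 c01 = (INF lam. c10 * p0 * (1 - (\<Prod>n<N. 1 - PeI f n (lam n)))
                    + c01 * (1 - p0) * (\<Prod>n<N. PeII f n (lam n)))"
      unfolding min_risk_sec_def by simp
  qed
  have B: "L = N \<longrightarrow> min_risk_sec N L f p0 c10 c01 =
          (INF lam. c10 * p0 * (\<Prod>n<N. PeI f n (lam n))
                    + c01 * (1 - p0) * (1 - (\<Prod>n<N. 1 - PeII f n (lam n))))"
  proof
    assume LN: "L = N"
    have Lc': "(L = 1 \<and> True = False) \<or> (L = N \<and> True = True)" using LN by simp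
    have "risk_sec N L f p0 c10 c01 lam = c10 * p0 * (\<Prod>n<N. PeI f n (lam n))
                    + c01 * (1 - p0) * (1 - (\<Prod>n<N. 1 - PeII f n (lam n)))" for lam
    proof -
      have "(\<Prod>n<N. 1 - PeII f n (lam n)) = (\<Prod>n<N. dec_prob (f n True) (lam n) True)"
      proof (rule prod.cong[OF refl])
        fix n assume "n \<in> {..<N}"
        then have "dec_prob (f n True) (lam n) True + dec_prob (f n True) (lam n) False = 1"
          using dec_sum[OF dens_prob[of n]] by simp
        then show "1 - PeII f n (lam n) = dec_prob (f n True) (lam n) True"
          unfolding PeII_def by linarith
      qed
      then show ?thesis unfolding risk_sec_def
        by (simp only: sec_formula[OF dpa Lc'] PeI_def if_True if_False simp_thms)
    qed
    then show "min_risk_sec N L f p0 c10 c01 = (INF lam. c10 * p0 * (\<Prod>n<N. PeI f n (lam n))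
                    + c01 * (1 - p0) * (1 - (\<Prod>n<N. 1 - PeII f n (lam n))))"
      unfolding min_risk_sec_def by simp
  qed
  have C: "\<forall>lam. risk_sec N L f p0 c10 c01 lam = min_risk_sec N L f p0 c10 c01 \<longrightarrow>
          (\<forall>\<sigma>. bij_betw \<sigma> {..<N} {..<N} \<longrightarrow>
             risk_pub N L f p0 c10 c01 \<sigma> (\<lambda>k hist. lam (\<sigma> k))
               = min_risk_pub N L f p0 c10 c01 \<sigma>)"
    using sec_to_pub[OF dpa Lc] R by simp
  show ?thesis using R A B C by blast
qed

end
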